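(* Let $\Phi$ be a channel matrix whose rows $P^1,\dots,P^4\in\Delta^n$ are in general position, let $Q^0$ be the equidistant point from $P^1,\dots,P^4$ with barycentric coordinate $\boldsymbol\lambda^0$, and suppose $\lambda^0_1<0$, $\lambda^0_2,\lambda^0_3,\lambda^0_4\ge0$. Let $Q^1=\pi(Q^0|L(P^2,P^3,P^4))$ with barycentric coordinate $\boldsymbol\lambda^1$ about $P^1,\dots,P^4$, and suppose $\lambda^1_2,\lambda^1_3,\lambda^1_4\ge0$. Then the output distribution achieving the channel capacity is $Q^\ast=Q^1$ and the channel capacity is $C=D(P^2\|Q^1)$.
   Context: $\Delta^n=\{Q:Q_j>0,\sum_jQ_j=1\}$, $\bar\Delta^m=\{\boldsymbol\lambda:\lambda_i\ge0,\sum_i\lambda_i=1\}$; $D(Q\|Q')=\sum_jQ_j\log(Q_j/Q'_j)$. Rows are in general position if $P^2-P^1,\dots,P^m-P^1$ are linearly independent. $L(S^1,\dots,S^r)=\{\sum_i\lambda_iS^i:\sum_i\lambda_i=1\}\cap\Delta^n$; for such an affine subspace $L$, $\pi(Q'|L)$ is the unique $Q\in L$ minimizing $D(Q\|Q')$. The barycentric coordinate of $Q\in L(P^1,\dots,P^m)$ is the unique $\boldsymbol\lambda$ with $\sum_i\lambda_i=1$, $Q=\sum_i\lambda_iP^i$. The equidistant point is the unique $Q^0\in L(P^1,\dots,P^m)$ with all $D(P^i\|Q^0)$ equal. Mutual information $I(\boldsymbol\lambda,\Phi)=\sum_{i,j}\lambda_iP^i_j\log(P^i_j/Q_j)$ with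 $Q=\boldsymbol\lambda\Phi$; capacity $C=\max_{\boldsymbol\lambda\in\bar\Delta^m}I(\boldsymbol\lambda,\Phi)$; the capacity-achieving output distribution is $Q^\ast=\boldsymbol\lambda^\ast\Phi$ for a maximizer $\boldsymbol\lambda^\ast$ (unique). *)

theory Defs
  imports Complex_Main
begin

text \<open>Vectors of length n are represented as functions nat \<Rightarrow> real with
  components 0..n-1; distributions are required to vanish outside {0..<n}
  (canonical representation). The channel matrix has rows P i, i \<in> {1..m}.\<close>

definition open_simplex :: "nat \<Rightarrow> (nat \<Rightarrow> real) set" where
  "open_simplex n = {Q. (\<forall>j<n. Q j > 0) \<and> (\<forall>j\<ge>n. Q j = 0) \<and> (\<Sum>j<n. Q j) = 1}"

definition closed_simplex :: "nat \<Rightarrow> (nat \<Rightarrow> real) set" where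
  "closed_simplex m = {l. (\<forall>i\<in>{1..m}. l i \<ge> 0) \<and> (\<forall>i. i \<notin> {1..m} \<longrightarrow> l i = 0)
                          \<and> (\<Sum>i\<in>{1..m}. l i) = 1}"

definition KL :: "nat \<Rightarrow> (nat \<Rightarrow> real) \<Rightarrow> (nat \<Rightarrow> real) \<Rightarrow> real" where
  "KL n Q Q' = (\<Sum>j<n. Q j * ln (Q j / Q' j))"

definition general_position :: "nat \<Rightarrow> nat \<Rightarrow> (nat \<Rightarrow> nat \<Rightarrow> real) \<Rightarrow> bool" where
  "general_position n m P \<longleftrightarrow>
     (\<forall>c :: nat \<Rightarrow> real. (\<forall>j<n. (\<Sum>i\<in>{2..m}. c i * (P i j - P 1 j)) = 0)
        \<longrightarrow> (\<forall>i\<in>{2..m}. c i = 0))"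

text \<open>L(S^i : i \<in> I) = affine hull of the points intersected with the open simplex.\<close>
definition affL :: "nat \<Rightarrow> (nat \<Rightarrow> nat \<Rightarrow> real) \<Rightarrow> nat set \<Rightarrow> (nat \<Rightarrow> real) set" where
  "affL n P I = {Q. Q \<in> open_simplex n \<and>
      (\<exists>l :: nat \<Rightarrow> real. (\<Sum>i\<in>I. l i) = 1 \<and> (\<forall>j<n. Q j = (\<Sum>i\<in>I. l i * P i j)))}"

definition proj :: "nat \<Rightarrow> (nat \<Rightarrow> real) set \<Rightarrow> (nat \<Rightarrow> real) \<Rightarrow> (nat \<Rightarrow> real)" where
  "proj n L Q' = (THE Q. Q \<in> L \<and> (\<forall>Q''\<in>L. KL n Q Q' \<le> KL n Q'' Q'))"

definition bary :: "nat \<Rightarrow> nat \<Rightarrow> (nat \<Rightarrow> nat \<Rightarrow> real) \<Rightarrow> (nat \<Rightarrow> real) \<Rightarrow> (nat \<Rightarrow> real)" where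
  "bary n m P Q = (THE l. (\<forall>i. i \<notin> {1..m} \<longrightarrow> l i = 0) \<and> (\<Sum>i\<in>{1..m}. l i) = 1 \<and>
                          (\<forall>j<n. Q j = (\<Sum>i\<in>{1..m}. l i * P i j)))"

definition equidistant :: "nat \<Rightarrow> nat \<Rightarrow> (nat \<Rightarrow> nat \<Rightarrow> real) \<Rightarrow> (nat \<Rightarrow> real)" where
  "equidistant n m P = (THE Q. Q \<in> affL n P {1..m} \<and>
      (\<forall>i\<in>{1..m}. \<forall>k\<in>{1..m}. KL n (P i) Q = KL n (P k) Q))"

definition out_dist :: "nat \<Rightarrow> nat \<Rightarrow> (nat \<Rightarrow> nat \<Rightarrow> real) \<Rightarrow> (nat \<Rightarrow> real) \<Rightarrow> (nat \<Rightarrow> real)" where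
  "out_dist n m P l = (\<lambda>j. if j < n then (\<Sum>i\<in>{1..m}. l i * P i j) else 0)"

definition mutual_info :: "nat \<Rightarrow> nat \<Rightarrow> (nat \<Rightarrow> nat \<Rightarrow> real) \<Rightarrow> (nat \<Rightarrow> real) \<Rightarrow> real" where
  "mutual_info n m P l = (\<Sum>i\<in>{1..m}. \<Sum>j<n. l i * P i j * ln (P i j / out_dist n m P l j))"

definition capacity :: "nat \<Rightarrow> nat \<Rightarrow> (nat \<Rightarrow> nat \<Rightarrow> real) \<Rightarrow> real" where
  "capacity n m P = (SUP l\<in>closed_simplex m. mutual_info n m P l)"

end

theory Submission imports Defs "HOL-Analysis.Analysis" "HOL-Real_Asymp.Real_Asymp"
begin


definition hh :: "real \<Rightarrow> real" where "hh x = x * ln x"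

lemma sum14: "(\<Sum>i\<in>{1..4::nat}. f i) = f 1 + f 2 + f 3 + f 4"
  by (simp add: numeral_eq_Suc sum.atLeast_Suc_atMost)
lemma sum24: "(\<Sum>i\<in>{2..4::nat}. f i) = f 2 + f 3 + f 4"
  by (simp add: numeral_eq_Suc sum.atLeast_Suc_atMost)
lemma set14: "{1..4::nat} = {1,2,3,4}" by auto
lemma set24: "{2..4::nat} = {2,3,4}" by auto

lemma hh_tangent:
  assumes "x > 0" "y \<ge> 0"
  shows "hh y \<ge> hh x + (y - x) * (ln x + 1)"
proof (cases "y = 0")
  case True then show ?thesis using assms by (simp add: hh_def algebra_simps)
next
  case False
  then have y: "y > 0" using assms by simp
  have "ln (x / y) \<le> x / y - 1" using ln_le_minus_one assms y by simp
  then have "y * ln (x/y) \<le> y * (x/y - 1)" using y by (simp add: mult_left_mono)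
  moreover have "y * (x/y - 1) = x - y" using y by (simp add: field_simps)
  moreover have "y * ln (x/y) = y * ln x - y * ln y" using y assms by (simp add: ln_div algebra_simps)
  ultimately have "y * ln x - y * ln y \<le> x - y" by simp
  moreover have "(y - x) * (ln x + 1) = y * ln x - x*ln x + y - x" by (simp add: algebra_simps)
  ultimately show ?thesis unfolding hh_def by linarith
qed

lemma hh_convex:
  assumes "q \<ge> 0" "b \<ge> 0" "0 \<le> t" "t \<le> 1" "(1-t)*q + t*b > 0"
  shows "hh ((1-t)*q + t*b) \<le> (1-t) * hh q + t * hh b"
proof -
  let ?z = "(1-t)*q + t*b"
  have 1: "hh q \<ge> hh ?z + (q - ?z) * (ln ?z + 1)" by (rule hh_tangent) (use assms in auto)
  have 2: "hh b \<ge> hh ?z + (b - ?z) * (ln ?z + 1)" by (rule hh_tangent) (use assms in auto)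
  have "(1-t) * hh q + t * hh b \<ge> (1-t) * (hh ?z + (q - ?z) * (ln ?z + 1)) + t * (hh ?z + (b - ?z) * (ln ?z + 1))"
    using 1 2 assms by (intro add_mono mult_left_mono) auto
  also have "(1-t) * (hh ?z + (q - ?z) * (ln ?z + 1)) + t * (hh ?z + (b - ?z) * (ln ?z + 1)) = hh ?z"
    by (simp add: algebra_simps)
  finally show ?thesis .
qed

lemma hh_cont: "continuous_on {0..} hh"
proof -
  have "continuous (at x within {0..}) hh" if "x \<ge> 0" for x
  proof (cases "x = 0")
    case True
    have "(hh \<longlongrightarrow> 0) (at_right 0)" unfolding hh_def by real_asymp
    then show ?thesis using True by (simp add: continuous_within at_within_Ici_at_right hh_def)
  next
    case False
    then have "x > 0" using that by simp
    then have "continuous (at x) hh" unfolding hh_def by (intro continuous_intros) auto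
    then show ?thesis using continuous_at_imp_continuous_within by blast
  qed
  then show ?thesis by (simp add: continuous_on_eq_continuous_within)
qed

lemma ln_strict: "(x::real) > 0 \<Longrightarrow> x \<noteq> 1 \<Longrightarrow> ln x < x - 1"
proof -
  assume a: "x > 0" "x \<noteq> 1"
  have "ln x \<le> x - 1" using a ln_le_minus_one by blast
  moreover have "ln x \<noteq> x - 1" using a ln_eq_minus_one by blast
  ultimately show "ln x < x - 1" by simp
qed

lemma gibbs:
  assumes Q: "Q \<in> open_simplex n" and R: "R \<in> open_simplex n"
  shows "KL n Q R \<ge> 0" and "KL n Q R = 0 \<Longrightarrow> Q = R"
proof -
  have Qp: "\<forall>j<n. Q j > 0" "\<forall>j\<ge>n. Q j = 0" "(\<Sum>j<n. Q j) = 1" using Q by (auto simp: open_simplex_def)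
  have Rp: "\<forall>j<n. R j > 0" "\<forall>j\<ge>n. R j = 0" "(\<Sum>j<n. R j) = 1" using R by (auto simp: open_simplex_def)
  have trm: "Q j * ln (Q j / R j) \<ge> Q j - R j" if "j < n" for j
  proof -
    have "ln (R j / Q j) \<le> R j / Q j - 1" using ln_le_minus_one Qp Rp that by simp
    then have "Q j * ln (R j / Q j) \<le> Q j * (R j / Q j - 1)" using Qp that by (simp add: mult_left_mono)
    moreover have "Q j * (R j / Q j - 1) = R j - Q j" using Qp that by (subgoal_tac "Q j > 0") (auto simp: field_simps)
    moreover have "Q j * ln (R j / Q j) = - (Q j * ln (Q j / R j))" using Qp Rp that by (simp add: ln_div algebra_simps)
    ultimately show ?thesis by simp
  qed
  have "KL n Q R \<ge> (\<Sum>j<n. Q j - R j)" unfolding KL_def by (rule sum_mono) (use trm in auto)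
  also have "(\<Sum>j<n. Q j - R j) = 0" using Qp Rp by (simp add: sum_subtractf)
  finally show "KL n Q R \<ge> 0" .
  assume eq: "KL n Q R = 0"
  show "Q = R"
  proof (rule ccontr)
    assume "Q \<noteq> R"
    then obtain j where j: "Q j \<noteq> R j" by auto
    then have jn: "j < n" using Qp Rp by (metis not_less)
    have qj: "Q j > 0" and rj: "R j > 0" using Qp Rp jn by auto
    have "R j / Q j \<noteq> 1" using j qj by simp
    then have "ln (R j / Q j) < R j / Q j - 1" using qj rj by (intro ln_strict) auto
    then have "Q j * ln (R j / Q j) < Q j * (R j / Q j - 1)" using Qp jn by (simp add: mult_strict_left_mono)
    moreover have "Q j * (R j / Q j - 1) = R j - Q j" using Qp jn by (subgoal_tac "Q j > 0") (auto simp: field_simps)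
    moreover have "Q j * ln (R j / Q j) = - (Q j * ln (Q j / R j))" using Qp Rp jn by (simp add: ln_div algebra_simps)
    ultimately have "Q j * ln (Q j / R j) > Q j - R j" by simp
    then have "KL n Q R > (\<Sum>j<n. Q j - R j)" unfolding KL_def
      by (intro sum_strict_mono_ex1) (use trm jn in auto)
    then show False using eq \<open>(\<Sum>j<n. Q j - R j) = 0\<close> by simp
  qed
qed





lemma hh_deriv: assumes "a > (0::real)" shows "DERIV (\<lambda>t. hh (a + t * b)) 0 :> b * (ln a + 1)"
proof -
  have "DERIV (\<lambda>t. (a + t * b) * ln (a + t * b)) 0 :> b * ln (a + 0 * b) + (a + 0*b) * (b / (a + 0 * b))"
    using assms by (intro derivative_eq_intros) auto
  then show ?thesis using assms unfolding hh_def by (simp add: algebra_simps)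
qed

lemma local_stat:
  fixes a b :: "nat \<Rightarrow> real"
  assumes apos: "\<forall>j<n. a j > 0"
  and mx: "\<forall>t. (\<forall>j<n. a j + t * b j > 0) \<longrightarrow> \<alpha> * t - (\<Sum>j<n. hh (a j + t * b j)) \<le> - (\<Sum>j<n. hh (a j))"
  shows "\<alpha> = (\<Sum>j<n. b j * (ln (a j) + 1))"
proof -
  define f where "f t = \<alpha> * t - (\<Sum>j<n. hh (a j + t * b j))" for t
  have D: "DERIV f 0 :> \<alpha> - (\<Sum>j<n. b j * (ln (a j) + 1))"
    unfolding f_def
  proof (intro derivative_eq_intros)
    show "DERIV (\<lambda>t. hh (a j + t * b j)) 0 :> b j * (ln (a j) + 1)" if "j \<in> {..<n}" for j
      using hh_deriv apos that by auto
  qed auto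
  define S where "S = insert 1 ((\<lambda>j. a j / (\<bar>b j\<bar> + 1)) ` {..<n})"
  define d where "d = Min S"
  have Sfin: "finite S" "S \<noteq> {}" unfolding S_def by auto
  have Spos: "\<forall>s\<in>S. s > 0" unfolding S_def using apos by (auto intro!: divide_pos_pos)
  have dpos: "d > 0" unfolding d_def using Sfin Spos by auto
  have "\<forall>y. \<bar>0 - y\<bar> < d \<longrightarrow> f y \<le> f 0"
  proof (intro allI impI)
    fix y :: real assume y: "\<bar>0 - y\<bar> < d"
    have "a j + y * b j > 0" if j: "j < n" for j
    proof -
      have "d \<le> a j / (\<bar>b j\<bar> + 1)" unfolding d_def using Sfin j by (intro Min_le) (auto simp: S_def)
      then have "\<bar>y\<bar> < a j / (\<bar>b j\<bar> + 1)" using y by simp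
      then have "\<bar>y\<bar> * (\<bar>b j\<bar> + 1) < a j" by (simp add: field_simps)
      moreover have "\<bar>y * b j\<bar> \<le> \<bar>y\<bar> * (\<bar>b j\<bar> + 1)" by (simp add: abs_mult mult_left_mono)
      ultimately show ?thesis by linarith
    qed
    then show "f y \<le> f 0" using mx unfolding f_def by simp
  qed
  from DERIV_local_max[OF D dpos this] show ?thesis by simp
qed



lemma exists_max:
  fixes M :: "'a::euclidean_space \<Rightarrow> nat \<Rightarrow> real" and B :: "nat \<Rightarrow> real" and ell :: "'a \<Rightarrow> real"
  assumes lin: "\<And>j. linear (\<lambda>x. M x j)"
  and inj: "\<And>x. (\<forall>j<n. M x j = 0) \<Longrightarrow> x = 0"
  and Bpos: "\<forall>j<n. B j > 0"
  and sumM: "\<And>x. (\<Sum>j<n. M x j) = 0"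
  and lc: "continuous_on UNIV ell"
  and laff: "\<And>x t. ell ((1-t) *\<^sub>R x) = (1-t) * ell x + t * ell 0"
  shows "\<exists>x. (\<forall>j<n. B j + M x j > 0) \<and> (\<forall>y. (\<forall>j<n. B j + M y j \<ge> 0) \<longrightarrow>
           ell y - (\<Sum>j<n. hh (B j + M y j)) \<le> ell x - (\<Sum>j<n. hh (B j + M x j)))"
proof -
  define K where "K = (\<Inter>j\<in>{..<n}. {x. 0 \<le> B j + M x j})"
  define F where "F y = ell y - (\<Sum>j<n. hh (B j + M y j))" for y
  have Mc: "continuous_on S (\<lambda>x. M x j)" for S j
    using lin linear_conv_bounded_linear linear_continuous_on by blast
  have Mscale: "M (c *\<^sub>R x) j = c * M x j" for c x j
    using linear_scale[OF lin] by simp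
  have M0: "M 0 j = 0" for j using linear_0[OF lin] by simp
  have closedK: "closed K" unfolding K_def
    by (intro closed_INT ballI closed_Collect_le continuous_intros Mc)
  define \<phi> where "\<phi> x = (\<Sum>j<n. \<bar>M x j\<bar>)" for x
  have \<phi>c: "continuous_on S \<phi>" for S unfolding \<phi>_def by (intro continuous_intros Mc)
  obtain b :: 'a where b: "b \<in> Basis" using nonempty_Basis by blast
  have "b \<in> sphere (0::'a) 1" using b by (simp add: norm_Basis)
  then have sne: "sphere (0::'a) 1 \<noteq> {}" by blast
  obtain u where u: "u \<in> sphere 0 1" and umin: "\<forall>y\<in>sphere 0 1. \<phi> u \<le> \<phi> y"
    using continuous_attains_inf[OF compact_sphere sne \<phi>c] by blast
  have mpos: "\<phi> u > 0"
  proof (rule ccontr)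
    assume "\<not> \<phi> u > 0"
    then have "\<phi> u = 0" unfolding \<phi>_def by (smt (verit) abs_ge_zero sum_nonneg)
    then have "\<forall>j<n. M u j = 0" unfolding \<phi>_def by (subst (asm) sum_nonneg_eq_0_iff) auto
    then have "u = 0" by (rule inj)
    then show False using u by simp
  qed
  have \<phi>low: "\<phi> x \<ge> \<phi> u * norm x" for x
  proof (cases "x = 0")
    case True then show ?thesis by (simp add: \<phi>_def M0)
  next
    case False
    have "(1/norm x) *\<^sub>R x \<in> sphere 0 1" using False by simp
    then have "\<phi> u \<le> \<phi> ((1/norm x) *\<^sub>R x)" using umin by blast
    also have "\<phi> ((1/norm x) *\<^sub>R x) = \<phi> x / norm x"
      unfolding \<phi>_def Mscale by (simp add: abs_mult sum_divide_distrib)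
    finally show ?thesis using False by (simp add: field_simps)
  qed
  define SB where "SB = (\<Sum>j<n. B j)"
  have \<phi>up: "\<phi> x \<le> 2 * SB" if "x \<in> K" for x
  proof -
    have "\<phi> x \<le> (\<Sum>j<n. (B j + M x j) + B j)" unfolding \<phi>_def
    proof (rule sum_mono)
      fix j assume j: "j \<in> {..<n}"
      then have "0 \<le> B j + M x j" "B j > 0" using that Bpos unfolding K_def by auto
      then show "\<bar>M x j\<bar> \<le> B j + M x j + B j" by linarith
    qed
    also have "\<dots> = 2 * SB" unfolding SB_def using sumM[of x] by (simp add: sum.distrib sum_distrib_left[symmetric])
    finally show ?thesis .
  qed
  have "bounded K"
  proof -
    have "norm x \<le> 2 * SB / \<phi> u" if "x \<in> K" for x
      using \<phi>low[of x] \<phi>up[OF that] mpos by (simp add: field_simps)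
    then show ?thesis unfolding bounded_iff by blast
  qed
  then have compK: "compact K" using closedK by (simp add: compact_eq_bounded_closed)
  have zK: "0 \<in> K" unfolding K_def using Bpos M0 by auto
  have Fc: "continuous_on K F" unfolding F_def
  proof (intro continuous_intros)
    show "continuous_on K ell" using lc continuous_on_subset by blast
    fix j assume "j \<in> {..<n}"
    then show "continuous_on K (\<lambda>y. hh (B j + M y j))"
      by (intro continuous_on_compose2[OF hh_cont]) (auto intro!: continuous_intros Mc simp: K_def)
  qed
  obtain x where xK: "x \<in> K" and xmax: "\<forall>y\<in>K. F y \<le> F x"
    using continuous_attains_sup[OF compK _ Fc] zK by blast
  have pos: "\<forall>j<n. B j + M x j > 0"
  proof (rule ccontr)
    assume "\<not> ?thesis"
    then obtain j0 where j0: "j0 < n" "B j0 + M x j0 \<le> 0" by auto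
    define q where "q j = B j + M x j" for j
    have qnn: "q j \<ge> 0" if "j < n" for j using xK that unfolding K_def q_def by auto
    have q0: "q j0 = 0" using qnn[OF j0(1)] j0 unfolding q_def by simp
    define A where "A = ell 0 - ell x + (\<Sum>j<n. hh (q j)) - (\<Sum>j<n. hh (B j))"
    define b0 where "b0 = B j0"
    have b0: "b0 > 0" using Bpos j0 b0_def by auto
    define t where "t = exp (-(\<bar>A\<bar>+1)/b0)"
    have t0: "t > 0" unfolding t_def by simp
    have t1: "t < 1" unfolding t_def using b0 by (simp add: divide_neg_pos add_pos_nonneg)
    have lnt: "- b0 * ln t = \<bar>A\<bar> + 1" unfolding t_def using b0 by simp
    define y where "y = (1-t) *\<^sub>R x"
    have Qy: "B j + M y j = (1-t) * q j + t * B j" for j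
      unfolding y_def Mscale q_def by (simp add: algebra_simps)
    have yK: "y \<in> K"
    proof -
      have "0 \<le> (1-t) * q j + t * B j" if "j < n" for j
        using qnn[OF that] Bpos that t0 t1 by (intro add_nonneg_nonneg mult_nonneg_nonneg) auto
      then show ?thesis unfolding K_def using Qy by auto
    qed
    define g where "g j = (1-t) * hh (q j) + t * hh (B j) + (if j = j0 then t * b0 * ln t else 0)" for j
    have hle: "hh ((1-t) * q j + t * B j) \<le> g j" if j: "j < n" for j
    proof (cases "j = j0")
      case True
      have "hh ((1-t) * q j + t * B j) = hh (t * b0)" using True q0 b0_def by simp
      also have "\<dots> = t * hh b0 + t * b0 * ln t" unfolding hh_def using t0 b0 by (simp add: ln_mult algebra_simps)
      finally show ?thesis unfolding g_def using True q0 b0_def by (simp add: hh_def)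
    next
      case False
      have "hh ((1-t) * q j + t * B j) \<le> (1-t) * hh (q j) + t * hh (B j)"
        using qnn[OF j] Bpos j t0 t1
        by (intro hh_convex) (auto intro!: add_nonneg_pos mult_nonneg_nonneg)
      then show ?thesis unfolding g_def using False by simp
    qed
    have "(\<Sum>j<n. hh (B j + M y j)) \<le> (\<Sum>j<n. g j)"
      unfolding Qy by (rule sum_mono) (use hle in auto)
    also have "(\<Sum>j<n. g j) = (1-t) * (\<Sum>j<n. hh (q j)) + t * (\<Sum>j<n. hh (B j)) + t * b0 * ln t"
      unfolding g_def using j0 by (simp add: sum.distrib sum_distrib_left)
    finally have S: "(\<Sum>j<n. hh (B j + M y j)) \<le> (1-t) * (\<Sum>j<n. hh (q j)) + t * (\<Sum>j<n. hh (B j)) + t * b0 * ln t" .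
    have "F y = (1-t) * ell x + t * ell 0 - (\<Sum>j<n. hh (B j + M y j))" unfolding F_def y_def laff by simp
    also have "\<dots> \<ge> F x + t * (A - b0 * ln t)"
      using S unfolding F_def A_def q_def by (simp add: algebra_simps)
    finally have "F y \<ge> F x + t * (A - b0 * ln t)" .
    moreover have "A - b0 * ln t > 0" using lnt abs_ge_self[of A] by linarith
    then have "t * (A - b0 * ln t) > 0" using t0 by simp
    ultimately have "F y > F x" by linarith
    then show False using xmax yK by force
  qed
  have "\<forall>y. (\<forall>j<n. 0 \<le> B j + M y j) \<longrightarrow> ell y - (\<Sum>j<n. hh (B j + M y j)) \<le> ell x - (\<Sum>j<n. hh (B j + M x j))"
    using xmax unfolding F_def K_def by auto
  then show ?thesis using pos by blast
qed



lemma os_pos: "Q \<in> open_simplex n \<Longrightarrow> j < n \<Longrightarrow> Q j > 0" by (auto simp: open_simplex_def)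
lemma os_zero: "Q \<in> open_simplex n \<Longrightarrow> j \<ge> n \<Longrightarrow> Q j = 0" by (auto simp: open_simplex_def)
lemma os_sum: "Q \<in> open_simplex n \<Longrightarrow> (\<Sum>j<n. Q j) = 1" by (auto simp: open_simplex_def)

lemma KL_expand:
  assumes "\<forall>j<n. Q j > 0" "\<forall>j<n. R j > 0"
  shows "KL n Q R = (\<Sum>j<n. Q j * (ln (Q j) - ln (R j)))"
  unfolding KL_def using assms by (intro sum.cong) (auto simp: ln_div)

lemma KL_hh:
  assumes "\<forall>j<n. Q j > 0" "\<forall>j<n. R j > 0"
  shows "KL n Q R = (\<Sum>j<n. hh (Q j)) - (\<Sum>j<n. Q j * ln (R j))"
  unfolding KL_expand[OF assms] hh_def by (simp add: algebra_simps sum_subtractf)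

lemma KL_self: "\<forall>j<n. Q j > 0 \<Longrightarrow> KL n Q Q = 0"
  unfolding KL_def by (intro sum.neutral) auto

lemma mix_identity:
  assumes fin: "finite I" and Pi: "\<forall>i\<in>I. P i \<in> open_simplex n"
    and R: "R \<in> open_simplex n" and R': "R' \<in> open_simplex n"
    and Q: "Q \<in> open_simplex n" and lq: "\<forall>j<n. Q j = (\<Sum>i\<in>I. l i * P i j)"
  shows "(\<Sum>i\<in>I. l i * (KL n (P i) R - KL n (P i) R')) = KL n Q R - KL n Q R'"
proof -
  have Rp: "\<forall>j<n. R j > 0" "\<forall>j<n. R' j > 0" "\<forall>j<n. Q j > 0" using R R' Q os_pos by blast+
  have d: "KL n S R - KL n S R' = (\<Sum>j<n. S j * (ln (R' j) - ln (R j)))" if "\<forall>j<n. S j > 0" for S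
    unfolding KL_expand[OF that Rp(1)] KL_expand[OF that Rp(2)] sum_subtractf[symmetric]
    by (intro sum.cong) (auto simp: algebra_simps)
  have "(\<Sum>i\<in>I. l i * (KL n (P i) R - KL n (P i) R')) = (\<Sum>i\<in>I. \<Sum>j<n. l i * P i j * (ln (R' j) - ln (R j)))"
  proof (intro sum.cong refl)
    fix i assume "i \<in> I"
    then have "\<forall>j<n. P i j > 0" using Pi os_pos by blast
    then show "l i * (KL n (P i) R - KL n (P i) R') = (\<Sum>j<n. l i * P i j * (ln (R' j) - ln (R j)))"
      by (simp add: d sum_distrib_left mult.assoc)
  qed
  also have "\<dots> = (\<Sum>j<n. \<Sum>i\<in>I. l i * P i j * (ln (R' j) - ln (R j)))" by (rule sum.swap)
  also have "\<dots> = (\<Sum>j<n. Q j * (ln (R' j) - ln (R j)))"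
    using lq by (intro sum.cong refl) (simp add: sum_distrib_right)
  also have "\<dots> = KL n Q R - KL n Q R'" using d[OF Rp(3)] by simp
  finally show ?thesis .
qed

lemma bary_eq:
  assumes gp: "general_position n 4 P" and l0: "\<forall>i. i \<notin> {1..4} \<longrightarrow> l i = 0"
    and ls: "(\<Sum>i\<in>{1..4}. l i) = 1" and lq: "\<forall>j<n. Q j = (\<Sum>i\<in>{1..4}. l i * P i j)"
  shows "bary n 4 P Q = l"
  unfolding bary_def
proof (rule the_equality)
  show "(\<forall>i. i \<notin> {1..4} \<longrightarrow> l i = 0) \<and> (\<Sum>i\<in>{1..4}. l i) = 1 \<and> (\<forall>j<n. Q j = (\<Sum>i\<in>{1..4}. l i * P i j))"
    using assms by blast
  fix l' assume A: "(\<forall>i. i \<notin> {1..4} \<longrightarrow> l' i = 0) \<and> (\<Sum>i\<in>{1..4}. l' i) = 1 \<and> (\<forall>j<n. Q j = (\<Sum>i\<in>{1..4}. l' i * P i j))"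
  define c where "c i = l' i - l i" for i
  have cs: "c 1 + c 2 + c 3 + c 4 = 0" using A ls unfolding c_def sum14 by linarith
  have "\<forall>j<n. (\<Sum>i\<in>{2..4}. c i * (P i j - P 1 j)) = 0"
  proof (intro allI impI)
    fix j assume j: "j < n"
    have e: "c 1 * P 1 j + c 2 * P 2 j + c 3 * P 3 j + c 4 * P 4 j = 0"
      using A lq j unfolding c_def sum14 by (simp add: algebra_simps)
    have "(\<Sum>i\<in>{2..4}. c i * (P i j - P 1 j)) = (c 1 * P 1 j + c 2 * P 2 j + c 3 * P 3 j + c 4 * P 4 j) - (c 1 + c 2 + c 3 + c 4) * P 1 j"
      unfolding sum24 by (simp add: algebra_simps)
    then show "(\<Sum>i\<in>{2..4}. c i * (P i j - P 1 j)) = 0" using e cs by simp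
  qed
  then have "\<forall>i\<in>{2..4}. c i = 0" using gp unfolding general_position_def by blast
  then have c234: "c 2 = 0" "c 3 = 0" "c 4 = 0" by auto
  then have "c 1 = 0" using cs by simp
  then have "\<forall>i\<in>{1..4}. c i = 0" using c234 unfolding set14 by auto
  then show "l' = l" using A l0 unfolding c_def by (metis eq_iff_diff_eq_0 ext)
qed



lemma pyth:
  assumes fin: "finite I" and Q: "Q \<in> affL n P I" and R: "R \<in> open_simplex n"
    and mn: "\<forall>Q''\<in>affL n P I. KL n Q R \<le> KL n Q'' R" and Q'': "Q'' \<in> affL n P I"
  shows "KL n Q'' R = KL n Q'' Q + KL n Q R"
proof -
  obtain l where lQ: "Q \<in> open_simplex n" "(\<Sum>i\<in>I. l i) = 1" "\<forall>j<n. Q j = (\<Sum>i\<in>I. l i * P i j)"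
    using Q unfolding affL_def by blast
  obtain l'' where lQ'': "Q'' \<in> open_simplex n" "(\<Sum>i\<in>I. l'' i) = 1" "\<forall>j<n. Q'' j = (\<Sum>i\<in>I. l'' i * P i j)"
    using Q'' unfolding affL_def by blast
  have Qp: "\<forall>j<n. Q j > 0" and Q''p: "\<forall>j<n. Q'' j > 0" and Rp: "\<forall>j<n. R j > 0"
    using lQ(1) lQ''(1) R os_pos by blast+
  define b where "b j = Q'' j - Q j" for j
  define \<alpha> where "\<alpha> = (\<Sum>j<n. b j * ln (R j))"
  have bs: "(\<Sum>j<n. b j) = 0" unfolding b_def using os_sum[OF lQ(1)] os_sum[OF lQ''(1)] by (simp add: sum_subtractf)
  have "\<alpha> = (\<Sum>j<n. b j * (ln (Q j) + 1))"
  proof (rule local_stat[OF Qp], intro allI impI)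
    fix t assume tp: "\<forall>j<n. Q j + t * b j > 0"
    define Qt where "Qt j = Q j + t * b j" for j
    have "Qt \<in> affL n P I"
      unfolding affL_def
    proof (intro CollectI conjI exI)
      show "Qt \<in> open_simplex n"
        unfolding open_simplex_def Qt_def b_def using tp os_zero[OF lQ(1)] os_zero[OF lQ''(1)]
          os_sum[OF lQ(1)] os_sum[OF lQ''(1)]
        by (auto simp: b_def sum.distrib sum_distrib_left[symmetric] sum_subtractf)
      show "(\<Sum>i\<in>I. l i + t * (l'' i - l i)) = 1"
        using lQ(2) lQ''(2) by (simp add: sum.distrib sum_distrib_left[symmetric] sum_subtractf)
      show "\<forall>j<n. Qt j = (\<Sum>i\<in>I. (l i + t * (l'' i - l i)) * P i j)"
        using lQ(3) lQ''(3) unfolding Qt_def b_def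
        by (simp add: algebra_simps sum.distrib sum_distrib_left sum_subtractf)
    qed
    then have "KL n Q R \<le> KL n Qt R" using mn by blast
    moreover have "KL n Qt R = (\<Sum>j<n. hh (Qt j)) - (\<Sum>j<n. Q j * ln (R j)) - t * \<alpha>"
      unfolding KL_hh[OF tp[folded Qt_def] Rp] Qt_def \<alpha>_def
      by (simp add: algebra_simps sum.distrib sum_distrib_left)
    moreover have "KL n Q R = (\<Sum>j<n. hh (Q j)) - (\<Sum>j<n. Q j * ln (R j))" by (rule KL_hh[OF Qp Rp])
    ultimately show "\<alpha> * t - (\<Sum>j<n. hh (Q j + t * b j)) \<le> - (\<Sum>j<n. hh (Q j))"
      unfolding Qt_def by (simp add: algebra_simps)
  qed
  also have "\<dots> = (\<Sum>j<n. b j * ln (Q j))" using bs by (simp add: algebra_simps sum.distrib)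
  finally have st: "(\<Sum>j<n. b j * (ln (Q j) - ln (R j))) = 0" unfolding \<alpha>_def
    by (simp add: algebra_simps sum_subtractf)
  have "KL n Q'' R - KL n Q'' Q - KL n Q R = (\<Sum>j<n. b j * (ln (Q j) - ln (R j)))"
    unfolding KL_expand[OF Q''p Rp] KL_expand[OF Q''p Qp] KL_expand[OF Qp Rp] b_def
    by (simp add: sum_subtractf[symmetric] algebra_simps)
  then show ?thesis using st by simp
qed

lemma proj_unique:
  assumes fin: "finite I" and Q: "Q \<in> affL n P I" and R: "R \<in> open_simplex n"
    and mn: "\<forall>Q''\<in>affL n P I. KL n Q R \<le> KL n Q'' R"
  shows "proj n (affL n P I) R = Q"
  unfolding proj_def
proof (rule the_equality)
  show "Q \<in> affL n P I \<and> (\<forall>Q''\<in>affL n P I. KL n Q R \<le> KL n Q'' R)" using Q mn by blast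
  fix Q' assume A: "Q' \<in> affL n P I \<and> (\<forall>Q''\<in>affL n P I. KL n Q' R \<le> KL n Q'' R)"
  have py: "KL n Q' R = KL n Q' Q + KL n Q R" using pyth[OF fin Q R mn] A by blast
  have "KL n Q' R \<le> KL n Q R" using A Q by blast
  moreover have "KL n Q R \<le> KL n Q' R" using mn A by blast
  ultimately have "KL n Q' Q = 0" using py by simp
  moreover have "Q' \<in> open_simplex n" "Q \<in> open_simplex n" using A Q unfolding affL_def by auto
  ultimately show "Q' = Q" using gibbs(2) by blast
qed



lemma proj_exists:
  assumes rows: "\<forall>i\<in>{1..4}. P i \<in> open_simplex n" and gp: "general_position n 4 P"
    and R: "R \<in> open_simplex n"
  shows "\<exists>Q\<in>affL n P {2..4}. \<forall>Q''\<in>affL n P {2..4}. KL n Q R \<le> KL n Q'' R"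
proof -
  have P1: "P 1 \<in> open_simplex n" and P2: "P 2 \<in> open_simplex n" and P3: "P 3 \<in> open_simplex n"
    and P4: "P 4 \<in> open_simplex n" using rows by auto
  define M :: "real \<times> real \<Rightarrow> nat \<Rightarrow> real" where
    "M x j = fst x * (P 3 j - P 2 j) + snd x * (P 4 j - P 2 j)" for x j
  define ell :: "real \<times> real \<Rightarrow> real" where "ell x = (\<Sum>j<n. (P 2 j + M x j) * ln (R j))" for x
  have lin: "linear (\<lambda>x. M x j)" for j
    by (rule linearI) (auto simp: M_def algebra_simps)
  have inj: "x = 0" if "\<forall>j<n. M x j = 0" for x
  proof -
    define c where "c i = (if i = 2 then - (fst x + snd x) else if i = 3 then fst x else snd x)" for i :: nat
    have "\<forall>j<n. (\<Sum>i\<in>{2..4}. c i * (P i j - P 1 j)) = 0"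
    proof (intro allI impI)
      fix j assume "j < n"
      then have "M x j = 0" using that by blast
      then show "(\<Sum>i\<in>{2..4}. c i * (P i j - P 1 j)) = 0" unfolding sum24 c_def M_def by (simp add: algebra_simps)
    qed
    then have "\<forall>i\<in>{2..4}. c i = 0" using gp unfolding general_position_def by blast
    then have "c 3 = 0" "c 4 = 0" by auto
    then show "x = 0" unfolding c_def by (simp add: prod_eq_iff)
  qed
  have Bpos: "\<forall>j<n. P 2 j > 0" using P2 os_pos by blast
  have sumM: "(\<Sum>j<n. M x j) = 0" for x
    unfolding M_def using os_sum[OF P2] os_sum[OF P3] os_sum[OF P4]
    by (simp add: sum.distrib sum_distrib_left[symmetric] sum_subtractf)
  have lc: "continuous_on UNIV ell" unfolding ell_def M_def by (intro continuous_intros)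
  have laff: "ell ((1-t) *\<^sub>R x) = (1-t) * ell x + t * ell 0" for x t
  proof -
    have "(1-t) * ell x + t * ell 0 = (\<Sum>j<n. (1-t)*((P 2 j + M x j) * ln (R j)) + t*((P 2 j + M 0 j)*ln (R j)))"
      by (simp add: ell_def sum.distrib sum_distrib_left)
    also have "\<dots> = ell ((1-t) *\<^sub>R x)" unfolding ell_def by (intro sum.cong) (auto simp: M_def algebra_simps)
    finally show ?thesis by simp
  qed
  obtain x where xp: "\<forall>j<n. P 2 j + M x j > 0" and xmax: "\<forall>y. (\<forall>j<n. P 2 j + M y j \<ge> 0) \<longrightarrow>
           ell y - (\<Sum>j<n. hh (P 2 j + M y j)) \<le> ell x - (\<Sum>j<n. hh (P 2 j + M x j))"
    using exists_max[OF lin inj Bpos sumM lc laff] by blast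
  define Q where "Q j = (if j < n then P 2 j + M x j else 0)" for j
  have Qp: "\<forall>j<n. Q j > 0" using xp Q_def by simp
  have Qos: "Q \<in> open_simplex n"
    unfolding open_simplex_def using xp os_sum[OF P2] sumM[of x] by (auto simp: Q_def sum.distrib)
  have QA: "Q \<in> affL n P {2..4}"
    unfolding affL_def
  proof (intro CollectI conjI exI)
    show "Q \<in> open_simplex n" by (rule Qos)
    let ?l = "\<lambda>i::nat. if i = 2 then 1 - fst x - snd x else if i = 3 then fst x else snd x"
    show "(\<Sum>i\<in>{2..4}. ?l i) = 1" unfolding sum24 by simp
    show "\<forall>j<n. Q j = (\<Sum>i\<in>{2..4}. ?l i * P i j)"
    proof (intro allI impI)
      fix j assume j: "j < n"
      have e: "?l 2 = 1 - fst x - snd x" "?l 3 = fst x" "?l 4 = snd x" by simp_all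
      have "Q j = P 2 j + (fst x * (P 3 j - P 2 j) + snd x * (P 4 j - P 2 j))" using j by (simp add: Q_def M_def)
      also have "\<dots> = (1 - fst x - snd x) * P 2 j + fst x * P 3 j + snd x * P 4 j" by (simp add: algebra_simps)
      finally show "Q j = (\<Sum>i\<in>{2..4}. ?l i * P i j)" unfolding sum24 e by simp
    qed
  qed
  have Rp: "\<forall>j<n. R j > 0" using R os_pos by blast
  have KLe: "KL n S R = (\<Sum>j<n. hh (S j)) - ell y" if "\<forall>j<n. S j > 0" "\<forall>j<n. S j = P 2 j + M y j" for S y
    unfolding KL_hh[OF that(1) Rp] ell_def using that(2) by simp
  show ?thesis
  proof (intro bexI[OF _ QA] ballI)
    fix Q'' assume Q'': "Q'' \<in> affL n P {2..4}"
    then obtain l where l: "Q'' \<in> open_simplex n" "(\<Sum>i\<in>{2..4}. l i) = 1" "\<forall>j<n. Q'' j = (\<Sum>i\<in>{2..4}. l i * P i j)"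
      unfolding affL_def by blast
    define y where "y = (l 3, l 4)"
    have Q''p: "\<forall>j<n. Q'' j > 0" using l(1) os_pos by blast
    have Qy: "\<forall>j<n. Q'' j = P 2 j + M y j"
    proof (intro allI impI)
      fix j assume "j < n"
      then have "Q'' j = l 2 * P 2 j + l 3 * P 3 j + l 4 * P 4 j" using l(3) unfolding sum24 by simp
      moreover have "l 2 = 1 - l 3 - l 4" using l(2) unfolding sum24 by simp
      ultimately have "Q'' j = (1 - l 3 - l 4) * P 2 j + l 3 * P 3 j + l 4 * P 4 j" by simp
      also have "\<dots> = P 2 j + (l 3 * (P 3 j - P 2 j) + l 4 * (P 4 j - P 2 j))" by (simp add: algebra_simps)
      finally show "Q'' j = P 2 j + M y j" unfolding M_def y_def by simp
    qed
    have "ell y - (\<Sum>j<n. hh (P 2 j + M y j)) \<le> ell x - (\<Sum>j<n. hh (P 2 j + M x j))"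
    proof -
      have "\<forall>j<n. P 2 j + M y j \<ge> 0"
      proof (intro allI impI)
        fix j assume j: "j < n"
        have "Q'' j > 0" "Q'' j = P 2 j + M y j" using Q''p Qy j by auto
        then show "P 2 j + M y j \<ge> 0" by simp
      qed
      then show ?thesis using xmax by blast
    qed
    moreover have "(\<Sum>j<n. hh (P 2 j + M y j)) = (\<Sum>j<n. hh (Q'' j))" using Qy by simp
    moreover have "(\<Sum>j<n. hh (P 2 j + M x j)) = (\<Sum>j<n. hh (Q j))" by (simp add: Q_def)
    moreover have "KL n Q R = (\<Sum>j<n. hh (Q j)) - ell x" by (rule KLe[OF Qp]) (simp add: Q_def)
    moreover have "KL n Q'' R = (\<Sum>j<n. hh (Q'' j)) - ell y" by (rule KLe[OF Q''p Qy])
    ultimately show "KL n Q R \<le> KL n Q'' R" by linarith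
  qed
qed



lemma equi_exists:
  assumes rows: "\<forall>i\<in>{1..4}. P i \<in> open_simplex n" and gp: "general_position n 4 P"
  shows "\<exists>Q. Q \<in> affL n P {1..4} \<and> (\<forall>i\<in>{1..4}. KL n (P i) Q = KL n (P 1) Q)"
proof -
  have P1: "P 1 \<in> open_simplex n" and P2: "P 2 \<in> open_simplex n" and P3: "P 3 \<in> open_simplex n"
    and P4: "P 4 \<in> open_simplex n" using rows by auto
  define M :: "real \<times> real \<times> real \<Rightarrow> nat \<Rightarrow> real" where
    "M x j = fst x * (P 2 j - P 1 j) + fst (snd x) * (P 3 j - P 1 j) + snd (snd x) * (P 4 j - P 1 j)" for x j
  define cc where "cc i = (\<Sum>j<n. hh (P i j))" for i
  define ell :: "real \<times> real \<times> real \<Rightarrow> real" where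
    "ell x = cc 1 + fst x * (cc 2 - cc 1) + fst (snd x) * (cc 3 - cc 1) + snd (snd x) * (cc 4 - cc 1)" for x
  have lin: "linear (\<lambda>x. M x j)" for j
    by (rule linearI) (auto simp: M_def algebra_simps)
  have inj: "x = 0" if "\<forall>j<n. M x j = 0" for x
  proof -
    define c where "c i = (if i = 2 then fst x else if i = 3 then fst (snd x) else snd (snd x))" for i :: nat
    have "\<forall>j<n. (\<Sum>i\<in>{2..4}. c i * (P i j - P 1 j)) = 0"
    proof (intro allI impI)
      fix j assume "j < n"
      then have "M x j = 0" using that by blast
      then show "(\<Sum>i\<in>{2..4}. c i * (P i j - P 1 j)) = 0" unfolding sum24 c_def M_def by simp
    qed
    then have "\<forall>i\<in>{2..4}. c i = 0" using gp unfolding general_position_def by blast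
    then have "c 2 = 0" "c 3 = 0" "c 4 = 0" by auto
    then show "x = 0" unfolding c_def by (simp add: prod_eq_iff)
  qed
  have Bpos: "\<forall>j<n. P 1 j > 0" using P1 os_pos by blast
  have sumM: "(\<Sum>j<n. M x j) = 0" for x
    unfolding M_def using os_sum[OF P1] os_sum[OF P2] os_sum[OF P3] os_sum[OF P4]
    by (simp add: sum.distrib sum_distrib_left[symmetric] sum_subtractf)
  have lc: "continuous_on UNIV ell" unfolding ell_def by (intro continuous_intros)
  have laff: "ell ((1-t) *\<^sub>R x) = (1-t) * ell x + t * ell 0" for x t
    unfolding ell_def by (simp add: algebra_simps)
  obtain x where xp: "\<forall>j<n. P 1 j + M x j > 0" and xmax: "\<forall>y. (\<forall>j<n. P 1 j + M y j \<ge> 0) \<longrightarrow>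
           ell y - (\<Sum>j<n. hh (P 1 j + M y j)) \<le> ell x - (\<Sum>j<n. hh (P 1 j + M x j))"
    using exists_max[OF lin inj Bpos sumM lc laff] by blast
  define a where "a j = P 1 j + M x j" for j
  have ap: "\<forall>j<n. a j > 0" using xp a_def by simp
  have stat: "ell d - cc 1 = (\<Sum>j<n. M d j * ln (a j))" for d
  proof -
    have "ell d - cc 1 = (\<Sum>j<n. M d j * (ln (a j) + 1))"
    proof (rule local_stat[OF ap], intro allI impI)
      fix t assume tp: "\<forall>j<n. a j + t * M d j > 0"
      define y where "y = x + t *\<^sub>R d"
      have My: "P 1 j + M y j = a j + t * M d j" for j
        unfolding y_def a_def using linear_add[OF lin] linear_scale[OF lin] by simp
      have ly: "ell y = ell x + t * (ell d - cc 1)" unfolding y_def ell_def by (simp add: algebra_simps)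
      have "\<forall>j<n. P 1 j + M y j \<ge> 0" using tp My by (simp add: less_imp_le)
      then have "ell y - (\<Sum>j<n. hh (P 1 j + M y j)) \<le> ell x - (\<Sum>j<n. hh (P 1 j + M x j))"
        using xmax by blast
      then show "(ell d - cc 1) * t - (\<Sum>j<n. hh (a j + t * M d j)) \<le> - (\<Sum>j<n. hh (a j))"
        unfolding My ly a_def by (simp add: algebra_simps)
    qed
    also have "\<dots> = (\<Sum>j<n. M d j * ln (a j))" using sumM[of d] by (simp add: algebra_simps sum.distrib)
    finally show ?thesis .
  qed
  define Q where "Q j = (if j < n then a j else 0)" for j
  have Qp: "\<forall>j<n. Q j > 0" using ap Q_def by simp
  have Qos: "Q \<in> open_simplex n"
    unfolding open_simplex_def using ap os_sum[OF P1] sumM[of x] by (auto simp: Q_def a_def sum.distrib)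
  have QA: "Q \<in> affL n P {1..4}"
    unfolding affL_def
  proof (intro CollectI conjI exI)
    show "Q \<in> open_simplex n" by (rule Qos)
    let ?l = "\<lambda>i::nat. if i = 1 then 1 - fst x - fst (snd x) - snd (snd x) else if i = 2 then fst x
                 else if i = 3 then fst (snd x) else snd (snd x)"
    show "(\<Sum>i\<in>{1..4}. ?l i) = 1" unfolding sum14 by simp
    show "\<forall>j<n. Q j = (\<Sum>i\<in>{1..4}. ?l i * P i j)"
    proof (intro allI impI)
      fix j assume j: "j < n"
      have e: "?l 1 = 1 - fst x - fst (snd x) - snd (snd x)" "?l 2 = fst x" "?l 3 = fst (snd x)" "?l 4 = snd (snd x)" by simp_all
      have "Q j = P 1 j + (fst x * (P 2 j - P 1 j) + fst (snd x) * (P 3 j - P 1 j) + snd (snd x) * (P 4 j - P 1 j))"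
        using j by (simp add: Q_def a_def M_def)
      also have "\<dots> = (1 - fst x - fst (snd x) - snd (snd x)) * P 1 j + fst x * P 2 j + fst (snd x) * P 3 j + snd (snd x) * P 4 j"
        by (simp add: algebra_simps)
      finally show "Q j = (\<Sum>i\<in>{1..4}. ?l i * P i j)" unfolding sum14 e by simp
    qed
  qed
  have Pp: "\<forall>j<n. P i j > 0" if "i \<in> {1..4}" for i using rows that os_pos by blast
  have KLc: "KL n (P i) Q = cc i - (\<Sum>j<n. P i j * ln (a j))" if "i \<in> {1..4}" for i
    unfolding KL_hh[OF Pp[OF that] Qp] cc_def by (simp add: Q_def)
  have diff: "KL n (P i) Q - KL n (P 1) Q = (cc i - cc 1) - (\<Sum>j<n. (P i j - P 1 j) * ln (a j))" if "i \<in> {1..4}" for i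
    using KLc[OF that] KLc[of 1] by (simp add: algebra_simps sum_subtractf)
  have e2: "cc 2 - cc 1 = (\<Sum>j<n. (P 2 j - P 1 j) * ln (a j))" using stat[of "(1,0,0)"] by (simp add: ell_def M_def)
  have e3: "cc 3 - cc 1 = (\<Sum>j<n. (P 3 j - P 1 j) * ln (a j))" using stat[of "(0,1,0)"] by (simp add: ell_def M_def)
  have e4: "cc 4 - cc 1 = (\<Sum>j<n. (P 4 j - P 1 j) * ln (a j))" using stat[of "(0,0,1)"] by (simp add: ell_def M_def)
  have d2: "KL n (P 2) Q = KL n (P 1) Q" using diff[of 2] e2 by simp
  have d3: "KL n (P 3) Q = KL n (P 1) Q" using diff[of 3] e3 by simp
  have d4: "KL n (P 4) Q = KL n (P 1) Q" using diff[of 4] e4 by simp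
  have "\<forall>i\<in>{1..4}. KL n (P i) Q = KL n (P 1) Q"
  proof
    fix i assume "i \<in> {1..4::nat}"
    then have "i = 1 \<or> i = 2 \<or> i = 3 \<or> i = 4" by auto
    then show "KL n (P i) Q = KL n (P 1) Q" using d2 d3 d4 by auto
  qed
  then show ?thesis using QA by blast
qed

lemma equi_unique:
  assumes rows: "\<forall>i\<in>{1..4}. P i \<in> open_simplex n"
    and Q: "Q \<in> affL n P {1..4}" and Qe: "\<forall>i\<in>{1..4}. KL n (P i) Q = KL n (P 1) Q"
    and Q': "Q' \<in> affL n P {1..4}" and Q'e: "\<forall>i\<in>{1..4}. KL n (P i) Q' = KL n (P 1) Q'"
  shows "KL n Q Q' \<le> KL n (P 1) Q' - KL n (P 1) Q"
proof -
  obtain l where l: "Q \<in> open_simplex n" "(\<Sum>i\<in>{1..4}. l i) = 1" "\<forall>j<n. Q j = (\<Sum>i\<in>{1..4}. l i * P i j)"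
    using Q unfolding affL_def by blast
  have Q'os: "Q' \<in> open_simplex n" using Q' unfolding affL_def by blast
  have "(\<Sum>i\<in>{1..4}. l i * (KL n (P i) Q' - KL n (P i) Q)) = KL n Q Q' - KL n Q Q"
    by (rule mix_identity[OF _ rows Q'os l(1) l(1) l(3)]) simp
  moreover have "(\<Sum>i\<in>{1..4}. l i * (KL n (P i) Q' - KL n (P i) Q)) = (\<Sum>i\<in>{1..4}. l i) * (KL n (P 1) Q' - KL n (P 1) Q)"
    unfolding sum_distrib_right
  proof (intro sum.cong refl)
    fix i assume i: "i \<in> {1..4::nat}"
    have "KL n (P i) Q = KL n (P 1) Q" "KL n (P i) Q' = KL n (P 1) Q'" using Qe Q'e i by blast+
    then show "l i * (KL n (P i) Q' - KL n (P i) Q) = l i * (KL n (P 1) Q' - KL n (P 1) Q)" by simp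
  qed
  moreover have "KL n Q Q = 0" using l(1) os_pos KL_self by blast
  ultimately show ?thesis using l(2) by simp
qed

lemma equidistant_eq:
  assumes rows: "\<forall>i\<in>{1..4}. P i \<in> open_simplex n"
    and Q: "Q \<in> affL n P {1..4}" and Qe: "\<forall>i\<in>{1..4}. KL n (P i) Q = KL n (P 1) Q"
  shows "equidistant n 4 P = Q"
  unfolding equidistant_def
proof (rule the_equality)
  show "Q \<in> affL n P {1..4} \<and> (\<forall>i\<in>{1..4}. \<forall>k\<in>{1..4}. KL n (P i) Q = KL n (P k) Q)"
  proof (intro conjI ballI)
    show "Q \<in> affL n P {1..4}" by (rule Q)
    fix i k assume "i \<in> {1..4::nat}" "k \<in> {1..4::nat}"
    then have "KL n (P i) Q = KL n (P 1) Q" "KL n (P k) Q = KL n (P 1) Q" using Qe by blast+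
    then show "KL n (P i) Q = KL n (P k) Q" by simp
  qed
  fix Q' assume A: "Q' \<in> affL n P {1..4} \<and> (\<forall>i\<in>{1..4}. \<forall>k\<in>{1..4}. KL n (P i) Q' = KL n (P k) Q')"
  have Q'e: "\<forall>i\<in>{1..4}. KL n (P i) Q' = KL n (P 1) Q'"
  proof
    fix i assume "i \<in> {1..4::nat}"
    moreover have "(1::nat) \<in> {1..4}" by simp
    ultimately show "KL n (P i) Q' = KL n (P 1) Q'" using A by blast
  qed
  have 1: "KL n Q Q' \<le> KL n (P 1) Q' - KL n (P 1) Q" using equi_unique[OF rows Q Qe _ Q'e] A by blast
  have 2: "KL n Q' Q \<le> KL n (P 1) Q - KL n (P 1) Q'" using equi_unique[OF rows _ Q'e Q Qe] A by blast
  have os: "Q \<in> open_simplex n" "Q' \<in> open_simplex n" using A Q unfolding affL_def by auto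
  have "KL n Q' Q \<ge> 0" "KL n Q Q' \<ge> 0" using gibbs(1) os by blast+
  then have "KL n Q' Q = 0" using 1 2 by linarith
  then show "Q' = Q" using gibbs(2) os by blast
qed



theorem theorem18:
  fixes n :: nat and P :: "nat \<Rightarrow> nat \<Rightarrow> real"
    and Q0 Q1 lam0 lam1 :: "nat \<Rightarrow> real"
  assumes rows: "\<forall>i\<in>{1..4}. P i \<in> open_simplex n"
    and gp: "general_position n 4 P"
    and Q0: "Q0 = equidistant n 4 P"
    and lam0: "lam0 = bary n 4 P Q0"
    and neg1: "lam0 1 < 0"
    and nn0: "lam0 2 \<ge> 0" "lam0 3 \<ge> 0" "lam0 4 \<ge> 0"
    and Q1: "Q1 = proj n (affL n P {2..4}) Q0"
    and lam1: "lam1 = bary n 4 P Q1"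
    and nn1: "lam1 2 \<ge> 0" "lam1 3 \<ge> 0" "lam1 4 \<ge> 0"
  shows "(\<exists>l\<in>closed_simplex 4. mutual_info n 4 P l = capacity n 4 P)
       \<and> (\<forall>l\<in>closed_simplex 4. mutual_info n 4 P l = capacity n 4 P \<longrightarrow> out_dist n 4 P l = Q1)
       \<and> capacity n 4 P = KL n (P 2) Q1"
proof -
  have P1: "P 1 \<in> open_simplex n" and P2: "P 2 \<in> open_simplex n" and P3: "P 3 \<in> open_simplex n"
    and P4: "P 4 \<in> open_simplex n" using rows by auto
  obtain Qe where Qe: "Qe \<in> affL n P {1..4}" "\<forall>i\<in>{1..4}. KL n (P i) Qe = KL n (P 1) Qe"
    using equi_exists[OF rows gp] by blast
  have Q0e: "Q0 = Qe" using equidistant_eq[OF rows Qe] Q0 by simp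
  have Q0A: "Q0 \<in> affL n P {1..4}" and Q0eq: "\<forall>i\<in>{1..4}. KL n (P i) Q0 = KL n (P 1) Q0"
    unfolding Q0e using Qe by blast+
  obtain l0 where l0: "Q0 \<in> open_simplex n" "(\<Sum>i\<in>{1..4}. l0 i) = 1" "\<forall>j<n. Q0 j = (\<Sum>i\<in>{1..4}. l0 i * P i j)"
    using Q0A unfolding affL_def by blast
  define l0' where "l0' i = (if i \<in> {1..4} then l0 i else 0)" for i
  have s14: "(\<Sum>i\<in>{1..4::nat}. l0' i * f i) = (\<Sum>i\<in>{1..4}. l0 i * f i)" for f
    unfolding l0'_def by (intro sum.cong) auto
  have lam0e: "lam0 = l0'" unfolding lam0
    by (rule bary_eq[OF gp]) (use l0 s14[of "\<lambda>_. 1"] s14 in \<open>auto simp: l0'_def\<close>)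
  have lam0s: "(\<Sum>i\<in>{1..4}. lam0 i) = 1" using s14[of "\<lambda>_. 1"] l0(2) lam0e by simp
  have lam0q: "\<forall>j<n. Q0 j = (\<Sum>i\<in>{1..4}. lam0 i * P i j)" using l0(3) s14 lam0e by simp
  have Q0os: "Q0 \<in> open_simplex n" by (rule l0(1))
  obtain Qp where Qp: "Qp \<in> affL n P {2..4}" "\<forall>Q''\<in>affL n P {2..4}. KL n Qp Q0 \<le> KL n Q'' Q0"
    using proj_exists[OF rows gp Q0os] by blast
  have Q1e: "Q1 = Qp" using proj_unique[OF _ Qp(1) Q0os Qp(2)] Q1 by simp
  have Q1A: "Q1 \<in> affL n P {2..4}" and Q1min: "\<forall>Q''\<in>affL n P {2..4}. KL n Q1 Q0 \<le> KL n Q'' Q0"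
    unfolding Q1e using Qp by blast+
  obtain l1 where l1: "Q1 \<in> open_simplex n" "(\<Sum>i\<in>{2..4}. l1 i) = 1" "\<forall>j<n. Q1 j = (\<Sum>i\<in>{2..4}. l1 i * P i j)"
    using Q1A unfolding affL_def by blast
  define l1' where "l1' i = (if i \<in> {2..4} then l1 i else 0)" for i
  have s24: "(\<Sum>i\<in>{1..4::nat}. l1' i * f i) = (\<Sum>i\<in>{2..4}. l1 i * f i)" for f
    unfolding l1'_def sum14 sum24 by simp
  have lam1e: "lam1 = l1'" unfolding lam1
    by (rule bary_eq[OF gp]) (use l1 s24[of "\<lambda>_. 1"] s24 in \<open>auto simp: l1'_def\<close>)
  have lam1s: "(\<Sum>i\<in>{1..4}. lam1 i) = 1" using s24[of "\<lambda>_. 1"] l1(2) lam1e by simp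
  have lam1q: "\<forall>j<n. Q1 j = (\<Sum>i\<in>{1..4}. lam1 i * P i j)" using l1(3) s24 lam1e by simp
  have lam1_1: "lam1 1 = 0" using lam1e l1'_def by simp
  have Q1os: "Q1 \<in> open_simplex n" by (rule l1(1))
  have Q1p: "\<forall>j<n. Q1 j > 0" using Q1os os_pos by blast
  have PkA: "P k \<in> affL n P {2..4}" if "k \<in> {2..4}" for k
    unfolding affL_def
  proof (intro CollectI conjI exI)
    show "P k \<in> open_simplex n" using rows that by auto
    show "(\<Sum>i\<in>{2..4}. (if i = k then 1 else 0 :: real)) = 1" using that by simp
    show "\<forall>j<n. P k j = (\<Sum>i\<in>{2..4}. (if i = k then 1 else 0) * P i j)"
    proof (intro allI impI)
      fix j
      have "(\<Sum>i\<in>{2..4}. (if i = k then 1 else 0) * P i j) = (\<Sum>i\<in>{2..4}. if i = k then P i j else 0)"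
        by (intro sum.cong) auto
      also have "\<dots> = P k j" using that by (simp add: sum.delta)
      finally show "P k j = (\<Sum>i\<in>{2..4}. (if i = k then 1 else 0) * P i j)" by simp
    qed
  qed
  define C where "C = KL n (P 2) Q1"
  define D10 where "D10 = KL n Q1 Q0"
  have py: "KL n (P k) Q0 = KL n (P k) Q1 + D10" if "k \<in> {2..4}" for k
    unfolding D10_def by (rule pyth[OF _ Q1A Q0os Q1min PkA[OF that]]) simp
  have eqk: "KL n (P k) Q0 = KL n (P 1) Q0" if "k \<in> {1..4}" for k using Q0eq that by blast
  have Ck: "KL n (P k) Q1 = C" if "k \<in> {2..4}" for k
  proof -
    have "KL n (P k) Q1 = KL n (P 1) Q0 - D10" using py[OF that] eqk[of k] that by simp
    moreover have "KL n (P 2) Q1 = KL n (P 1) Q0 - D10" using py[of 2] eqk[of 2] by simp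
    ultimately show ?thesis unfolding C_def by simp
  qed
  have C1: "KL n (P 1) Q1 \<le> C"
  proof -
    have mi: "(\<Sum>i\<in>{1..4}. lam0 i * (KL n (P i) Q1 - KL n (P i) Q0)) = KL n Q0 Q1 - KL n Q0 Q0"
      by (rule mix_identity[OF _ rows Q1os Q0os Q0os lam0q]) simp
    have "KL n Q0 Q0 = 0" using KL_self Q0os os_pos by blast
    moreover have "KL n Q0 Q1 \<ge> 0" "D10 \<ge> 0" using gibbs(1) Q0os Q1os D10_def by blast+
    moreover have x: "KL n (P 2) Q1 - KL n (P 2) Q0 = - D10" "KL n (P 3) Q1 - KL n (P 3) Q0 = - D10"
      "KL n (P 4) Q1 - KL n (P 4) Q0 = - D10" using py[of 2] py[of 3] py[of 4] by simp_all
    ultimately have "lam0 1 * (KL n (P 1) Q1 - KL n (P 1) Q0) - (lam0 2 + lam0 3 + lam0 4) * D10 \<ge> 0"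
      using mi unfolding sum14 x by (simp add: algebra_simps)
    moreover have "lam0 2 + lam0 3 + lam0 4 = 1 - lam0 1" using lam0s unfolding sum14 by simp
    ultimately have "lam0 1 * (KL n (P 1) Q1 - KL n (P 1) Q0) - (1 - lam0 1) * D10 \<ge> 0"
      by simp
    then have "lam0 1 * (KL n (P 1) Q1 - KL n (P 1) Q0 + D10) \<ge> D10"
      by (simp add: algebra_simps)
    then have "lam0 1 * (KL n (P 1) Q1 - KL n (P 1) Q0 + D10) \<ge> 0" using \<open>D10 \<ge> 0\<close> by linarith
    then have "KL n (P 1) Q1 - KL n (P 1) Q0 + D10 \<le> 0" using neg1 by (simp add: zero_le_mult_iff)
    moreover have "KL n (P 2) Q0 = KL n (P 1) Q0" using eqk[of 2] by simp
    ultimately show ?thesis using py[of 2] unfolding C_def by simp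
  qed
  have Cle: "KL n (P i) Q1 \<le> C" if "i \<in> {1..4}" for i
  proof -
    have "i = 1 \<or> i \<in> {2..4}" using that by auto
    then show ?thesis using C1 Ck by auto
  qed
  have MI: "mutual_info n 4 P l = (\<Sum>i\<in>{1..4}. l i * KL n (P i) Q1) - KL n (out_dist n 4 P l) Q1
            \<and> out_dist n 4 P l \<in> open_simplex n"
    if l: "l \<in> closed_simplex 4" for l
  proof -
    have lnn: "\<forall>i\<in>{1..4}. l i \<ge> 0" and ls: "(\<Sum>i\<in>{1..4}. l i) = 1"
      using l unfolding closed_simplex_def by auto
    define Ql where "Ql = out_dist n 4 P l"
    have Qlp: "Ql j > 0" if j: "j < n" for j
    proof -
      have nn: "\<forall>i\<in>{1..4}. l i * P i j \<ge> 0"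
      proof
        fix i assume i: "i \<in> {1..4::nat}"
        have "P i j > 0" using rows i os_pos j by blast
        then show "l i * P i j \<ge> 0" using lnn i by simp
      qed
      moreover have ex: "\<exists>i\<in>{1..4}. l i * P i j > 0"
      proof (rule ccontr)
        assume nex: "\<not> (\<exists>i\<in>{1..4}. l i * P i j > 0)"
        have "\<forall>i\<in>{1..4}. l i = 0"
        proof
          fix i assume i: "i \<in> {1..4::nat}"
          have "P i j > 0" using rows i os_pos j by blast
          moreover have "\<not> l i * P i j > 0" using nex i by blast
          ultimately show "l i = 0" using lnn i by (metis less_eq_real_def mult_pos_pos)
        qed
        then show False using ls by simp
      qed
      from ex obtain i where i: "i \<in> {1..4::nat}" "l i * P i j > 0" by blast
      have "(\<Sum>i\<in>{1..4}. l i * P i j) > 0" by (rule sum_pos2[where i=i]) (use nn i in auto)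
      then show ?thesis unfolding Ql_def out_dist_def using j by simp
    qed
    have Qlos: "Ql \<in> open_simplex n"
      unfolding open_simplex_def
    proof (intro CollectI conjI allI impI)
      show "\<And>j. j < n \<Longrightarrow> Ql j > 0" by (rule Qlp)
      show "\<And>j. n \<le> j \<Longrightarrow> Ql j = 0" unfolding Ql_def out_dist_def by simp
      have "(\<Sum>j<n. Ql j) = (\<Sum>j<n. \<Sum>i\<in>{1..4}. l i * P i j)" unfolding Ql_def out_dist_def by simp
      also have "\<dots> = (\<Sum>i\<in>{1..4}. l i * (\<Sum>j<n. P i j))" by (subst sum.swap) (simp add: sum_distrib_left)
      also have "\<dots> = (\<Sum>i\<in>{1..4}. l i)" using rows os_sum by (intro sum.cong) auto
      finally show "(\<Sum>j<n. Ql j) = 1" using ls by simp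
    qed
    have Qlq: "\<forall>j<n. Ql j = (\<Sum>i\<in>{1..4}. l i * P i j)" unfolding Ql_def out_dist_def by simp
    have mi: "(\<Sum>i\<in>{1..4}. l i * (KL n (P i) Ql - KL n (P i) Q1)) = KL n Ql Ql - KL n Ql Q1"
      by (rule mix_identity[OF _ rows Qlos Q1os Qlos Qlq]) simp
    have "KL n Ql Ql = 0" using KL_self Qlp by blast
    moreover have "mutual_info n 4 P l = (\<Sum>i\<in>{1..4}. l i * KL n (P i) Ql)"
      unfolding mutual_info_def KL_def Ql_def by (simp add: sum_distrib_left mult.assoc)
    ultimately have "mutual_info n 4 P l = (\<Sum>i\<in>{1..4}. l i * KL n (P i) Q1) - KL n Ql Q1"
      using mi by (simp add: algebra_simps sum_subtractf)
    then show ?thesis using Qlos unfolding Ql_def by simp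
  qed
  have MIle: "mutual_info n 4 P l \<le> C - KL n (out_dist n 4 P l) Q1" if l: "l \<in> closed_simplex 4" for l
  proof -
    have lnn: "\<forall>i\<in>{1..4}. l i \<ge> 0" and ls: "(\<Sum>i\<in>{1..4}. l i) = 1"
      using l unfolding closed_simplex_def by auto
    have "(\<Sum>i\<in>{1..4}. l i * KL n (P i) Q1) \<le> (\<Sum>i\<in>{1..4}. l i * C)"
      using lnn Cle by (intro sum_mono mult_left_mono) auto
    also have "\<dots> = C" using ls by (simp add: sum_distrib_right[symmetric])
    finally show ?thesis using MI[OF l] by simp
  qed
  have lam1cs: "lam1 \<in> closed_simplex 4"
    unfolding closed_simplex_def
  proof (intro CollectI conjI ballI allI impI)
    fix i assume "i \<in> {1..4::nat}"
    then have "i = 1 \<or> i = 2 \<or> i = 3 \<or> i = 4" by auto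
    then show "lam1 i \<ge> 0" using lam1_1 nn1 by auto
  next
    fix i assume "i \<notin> {1..4::nat}"
    then show "lam1 i = 0" using lam1e l1'_def by auto
  next
    show "(\<Sum>i\<in>{1..4}. lam1 i) = 1" by (rule lam1s)
  qed
  have od1: "out_dist n 4 P lam1 = Q1"
  proof
    fix j show "out_dist n 4 P lam1 j = Q1 j"
      using lam1q os_zero[OF Q1os, of j] unfolding out_dist_def by (cases "j < n") auto
  qed
  have MI1: "mutual_info n 4 P lam1 = C"
  proof -
    have "(\<Sum>i\<in>{1..4}. lam1 i * KL n (P i) Q1) = lam1 1 * KL n (P 1) Q1 + (lam1 2 + lam1 3 + lam1 4) * C"
      unfolding sum14 using Ck[of 2] Ck[of 3] Ck[of 4] by (simp add: algebra_simps)
    also have "\<dots> = C" using lam1_1 lam1s unfolding sum14 by simp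
    finally show ?thesis using MI[OF lam1cs] od1 KL_self[OF Q1p] by simp
  qed
  have cap: "capacity n 4 P = C"
    unfolding capacity_def
  proof (rule cSup_eq_maximum)
    show "C \<in> mutual_info n 4 P ` closed_simplex 4" using MI1 lam1cs by force
    fix y assume "y \<in> mutual_info n 4 P ` closed_simplex 4"
    then obtain l where l: "l \<in> closed_simplex 4" "y = mutual_info n 4 P l" by blast
    have "KL n (out_dist n 4 P l) Q1 \<ge> 0" using gibbs(1) MI[OF l(1)] Q1os by blast
    then show "y \<le> C" using MIle[OF l(1)] l(2) by simp
  qed
  show ?thesis
  proof (intro conjI ballI impI)
    show "\<exists>l\<in>closed_simplex 4. mutual_info n 4 P l = capacity n 4 P" using lam1cs MI1 cap by (intro bexI[of _ lam1]) simp_all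
    fix l assume l: "l \<in> closed_simplex 4" and eq: "mutual_info n 4 P l = capacity n 4 P"
    have "KL n (out_dist n 4 P l) Q1 \<le> 0" using MIle[OF l] eq cap by simp
    moreover have "KL n (out_dist n 4 P l) Q1 \<ge> 0" using gibbs(1) MI[OF l] Q1os by blast
    ultimately have "KL n (out_dist n 4 P l) Q1 = 0" by simp
    then show "out_dist n 4 P l = Q1" using gibbs(2) MI[OF l] Q1os by blast
  next
    show "capacity n 4 P = KL n (P 2) Q1" using cap C_def by simp
  qed
qed

end
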